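(* Let $X$ be a compact metric space, $f\colon X\to X$ continuous, and $n\in\mathbb N$. Then $$\mathrm{Per}(f^{(n)})=\{[m_1,\dots,m_n]: m_i\in\mathrm{Per}(f)\ \text{for all}\ 1\le i\le n\},$$ $$\mathrm{Per}(f_n)=\bigcup_{l=1}^{n}\Big\{[d_1,\dots,d_l]: d_i\mid m_i\in\mathrm{Per}(f)\ \text{for all}\ 1\le i\le l,\ \text{and}\ \tfrac{m_1}{d_1}+\dots+\tfrac{m_l}{d_l}\le n\Big\},$$ $$\mathrm{Per}(f^{<\omega})=\bigcup_{l=1}^{\infty}\{[d_1,\dots,d_l]: d_i\mid m_i\in\mathrm{Per}(f)\ \text{for all}\ 1\le i\le l\},$$ where $[k_1,\dots,k_l]$ denotes the least common multiple of $k_1,\dots,k_l$.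
   Context: For a map $g$, $\mathrm{Per}(g)$ is the set of fundamental (least) periods of periodic points of $g$. $X^{(n)}$ is the $n$-fold Cartesian product $X\times\dots\times X$ and $f^{(n)}(x_1,\dots,x_n)=(f(x_1),\dots,f(x_n))$. $F_n(X)$ is the set of nonempty subsets of $X$ with at most $n$ points and $F(X)=\bigcup_{n\ge1}F_n(X)$ is the set of nonempty finite subsets of $X$; $f_n$ and $f^{<\omega}$ are the restrictions of the induced map $C\mapsto f(C)$ to $F_n(X)$ and $F(X)$ respectively. *)

theory Defs
  imports "HOL-Analysis.Analysis"
begin

definition least_period :: "('a \<Rightarrow> 'a) \<Rightarrow> 'a \<Rightarrow> nat \<Rightarrow> bool" where
  "least_period g x p \<longleftrightarrow> p > 0 \<and> (g ^^ p) x = x \<and> (\<forall>k. 0 < k \<and> k < p \<longrightarrow> (g ^^ k) x \<noteq> x)"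

definition Per :: "('a \<Rightarrow> 'a) \<Rightarrow> 'a set \<Rightarrow> nat set" where
  "Per g S = {p. \<exists>x\<in>S. least_period g x p}"

text \<open>n-fold product X^(n), points represented as lists of length n; f^(n) = map f.\<close>
definition prod_space :: "'a set \<Rightarrow> nat \<Rightarrow> 'a list set" where
  "prod_space X n = {xs. length xs = n \<and> set xs \<subseteq> X}"

definition Fn :: "'a set \<Rightarrow> nat \<Rightarrow> 'a set set" where
  "Fn X n = {C. C \<noteq> {} \<and> C \<subseteq> X \<and> finite C \<and> card C \<le> n}"

definition Ffin :: "'a set \<Rightarrow> 'a set set" where
  "Ffin X = {C. C \<noteq> {} \<and> C \<subseteq> X \<and> finite C}"

definition induced :: "('a \<Rightarrow> 'b) \<Rightarrow> 'a set \<Rightarrow> 'b set" where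
  "induced f C = f ` C"

end

theory Submission
  imports Defs
begin


lemma funpow_fix_mult:
  fixes g :: "'a \<Rightarrow> 'a"
  assumes "(g ^^ p) x = x" shows "(g ^^ (q * p)) x = x"
proof (induction q)
  case 0 then show ?case by simp
next
  case (Suc q)
  have "(g ^^ (Suc q * p)) x = (g ^^ p) ((g ^^ (q * p)) x)" by (simp add: funpow_add)
  then show ?case using Suc assms by simp
qed

lemma funpow_mod:
  fixes g :: "'a \<Rightarrow> 'a"
  assumes "(g ^^ p) x = x" shows "(g ^^ k) x = (g ^^ (k mod p)) x"
proof -
  have "(g ^^ k) x = (g ^^ (k mod p + k div p * p)) x" by (simp only: mod_div_mult_eq)
  also have "\<dots> = (g ^^ (k mod p)) ((g ^^ (k div p * p)) x)" by (simp only: funpow_add comp_apply)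
  also have "\<dots> = (g ^^ (k mod p)) x" using funpow_fix_mult[OF assms] by simp
  finally show ?thesis .
qed

lemma least_period_iff:
  fixes g :: "'a \<Rightarrow> 'a" shows "least_period g x p \<longleftrightarrow> p > 0 \<and> (\<forall>k. (g ^^ k) x = x \<longleftrightarrow> p dvd k)"
proof
  assume lp: "least_period g x p"
  hence p: "p > 0" "(g ^^ p) x = x" and mn: "\<And>k. 0 < k \<Longrightarrow> k < p \<Longrightarrow> (g ^^ k) x \<noteq> x"
    unfolding least_period_def by auto
  have "(g ^^ k) x = x \<longleftrightarrow> p dvd k" for k
  proof
    assume h: "(g ^^ k) x = x"
    hence "(g ^^ (k mod p)) x = x" using funpow_mod[OF p(2), of k] by simp
    moreover have "k mod p < p" using p by simp
    ultimately have "k mod p = 0" using mn[of "k mod p"] by (cases "k mod p = 0") auto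
    thus "p dvd k" by (simp add: dvd_eq_mod_eq_0)
  next
    assume "p dvd k" then obtain q where "k = q * p" by (metis dvd_def mult.commute)
    thus "(g ^^ k) x = x" using funpow_fix_mult[OF p(2)] by simp
  qed
  thus "p > 0 \<and> (\<forall>k. (g ^^ k) x = x \<longleftrightarrow> p dvd k)" using p by auto
next
  assume h: "p > 0 \<and> (\<forall>k. (g ^^ k) x = x \<longleftrightarrow> p dvd k)"
  note h1 = h[THEN conjunct1] and h2 = h[THEN conjunct2, rule_format]
  have "\<not> (g ^^ k) x = x" if "0 < k" "k < p" for k
  proof
    assume "(g ^^ k) x = x"
    hence "p dvd k" using h2 by simp
    hence "p \<le> k" using that(1) by (rule dvd_imp_le)
    thus False using that(2) by simp
  qed
  moreover have "(g ^^ p) x = x" using h2[of p] by simp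
  ultimately show "least_period g x p" unfolding least_period_def using h1 by simp
qed

lemma least_period_unique:
  fixes g :: "'a \<Rightarrow> 'a" shows "least_period g x p \<Longrightarrow> least_period g x q \<Longrightarrow> p = q"
proof -
  assume a: "least_period g x p" and b: "least_period g x q"
  have pq: "(g^^p) x = x" "(g^^q) x = x" using a b unfolding least_period_def by simp_all
  have "p dvd q" using a[unfolded least_period_iff] pq(2) by simp
  moreover have "q dvd p" using b[unfolded least_period_iff] pq(1) by simp
  ultimately show "p = q" by (rule dvd_antisym)
qed

lemma least_period_pos: "least_period g x p \<Longrightarrow> p > 0"
  unfolding least_period_def by simp

definition lp :: "('a \<Rightarrow> 'a) \<Rightarrow> 'a \<Rightarrow> nat" where
  "lp g x = (LEAST q. q > 0 \<and> (g ^^ q) x = x)"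

lemma lp_exists:
  fixes g :: "'a \<Rightarrow> 'a"
  assumes "(g ^^ p) x = x" "p > 0" shows "least_period g x (lp g x)"
proof -
  have 1: "lp g x > 0 \<and> (g ^^ lp g x) x = x" unfolding lp_def
    by (rule LeastI[of _ p]) (use assms in auto)
  have "\<not> (k > 0 \<and> (g^^k) x = x)" if "k < lp g x" for k
    using not_less_Least[OF that[unfolded lp_def]] by simp
  thus ?thesis using 1 unfolding least_period_def by blast
qed

lemma induced_funpow: fixes f :: "'a \<Rightarrow> 'a" shows "(induced f ^^ k) C = (f ^^ k) ` C"
  by (induction k) (simp_all add: induced_def image_comp)

lemma map_funpow: fixes f :: "'a \<Rightarrow> 'a" shows "(map f ^^ k) xs = map (f ^^ k) xs"
  by (induction k) simp_all

lemma map_fix_iff: "map g xs = xs \<longleftrightarrow> (\<forall>x\<in>set xs. g x = x)"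
  by (induction xs) auto

lemma Lcm_pos: "finite A \<Longrightarrow> 0 \<notin> A \<Longrightarrow> Lcm A > (0::nat)"
  by (metis Lcm_0_iff_nat neq0_conv)

lemma part1:
  fixes f :: "'a \<Rightarrow> 'a" shows "Per (map f) (prod_space X n) = {Lcm (set ms) | ms. length ms = n \<and> set ms \<subseteq> Per f X}"
proof (intro set_eqI iffI)
  fix p assume "p \<in> Per (map f) (prod_space X n)"
  then obtain xs where xs: "length xs = n" "set xs \<subseteq> X" and lpx: "least_period (map f) xs p"
    unfolding Per_def prod_space_def by auto
  have fixk: "(map f ^^ k) xs = xs \<longleftrightarrow> (\<forall>x\<in>set xs. (f^^k) x = x)" for k
    by (simp add: map_funpow map_fix_iff)
  have p: "p > 0" "(map f ^^ p) xs = xs" using lpx unfolding least_period_def by auto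
  have lpi: "least_period f x (lp f x)" if "x \<in> set xs" for x
  proof -
    have "(f ^^ p) x = x" using p(2) fixk that by blast
    thus ?thesis by (rule lp_exists[OF _ p(1)])
  qed
  define ms where "ms = map (lp f) xs"
  have A: "(map f ^^ k) xs = xs \<longleftrightarrow> Lcm (set ms) dvd k" for k
  proof -
    have pt: "(f^^k) x = x \<longleftrightarrow> lp f x dvd k" if "x\<in>set xs" for x
      using lpi[OF that] unfolding least_period_iff by blast
    show ?thesis unfolding fixk ms_def Lcm_dvd_iff set_map using pt by auto
  qed
  have B: "Lcm (set ms) > 0"
  proof -
    have "\<forall>x\<in>set xs. lp f x > 0" using lpi least_period_pos by metis
    thus ?thesis by (intro Lcm_pos) (auto simp: ms_def)
  qed
  have "least_period (map f) xs (Lcm (set ms))" unfolding least_period_iff using A B by simp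
  hence E: "p = Lcm (set ms)" by (rule least_period_unique[OF lpx])
  have "lp f x \<in> Per f X" if "x\<in>set xs" for x
    unfolding Per_def using lpi[OF that] xs(2) that by blast
  hence S: "set ms \<subseteq> Per f X" unfolding ms_def by auto
  have L: "length ms = n" using xs(1) by (simp add: ms_def)
  show "p \<in> {Lcm (set ms) | ms. length ms = n \<and> set ms \<subseteq> Per f X}"
    unfolding mem_Collect_eq using E L S by blast
next
  fix p assume "p \<in> {Lcm (set ms) | ms. length ms = n \<and> set ms \<subseteq> Per f X}"
  then obtain ms where ms: "p = Lcm (set ms)" "length ms = n" "set ms \<subseteq> Per f X" by auto
  define phi where "phi m = (SOME x. x \<in> X \<and> least_period f x m)" for m
  have phi: "phi m \<in> X \<and> least_period f (phi m) m" if "m \<in> set ms" for m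
  proof -
    have "\<exists>x. x \<in> X \<and> least_period f x m" using ms(3) that unfolding Per_def by blast
    thus ?thesis unfolding phi_def by (rule someI_ex)
  qed
  define xs where "xs = map phi ms"
  have A: "(map f ^^ k) xs = xs \<longleftrightarrow> Lcm (set ms) dvd k" for k
  proof -
    have pt: "(f^^k) (phi m) = phi m \<longleftrightarrow> m dvd k" if "m\<in>set ms" for m
      using phi[OF that] unfolding least_period_iff by blast
    show ?thesis unfolding map_funpow map_fix_iff xs_def Lcm_dvd_iff set_map using pt by auto
  qed
  have B: "Lcm (set ms) > 0"
  proof -
    have "\<forall>m\<in>set ms. m > 0" using phi least_period_pos by metis
    thus ?thesis by (intro Lcm_pos) auto
  qed
  have "least_period (map f) xs p" unfolding least_period_iff ms(1) using A B by simp
  moreover have "xs \<in> prod_space X n" using phi ms unfolding xs_def prod_space_def by auto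
  ultimately show "p \<in> Per (map f) (prod_space X n)" unfolding Per_def by blast
qed



definition orb :: "('a \<Rightarrow> 'a) \<Rightarrow> 'a \<Rightarrow> 'a set" where
  "orb f c = range (\<lambda>k. (f ^^ k) c)"

lemma funpow_comp_apply: fixes f :: "'a \<Rightarrow> 'a" shows "(f ^^ a) ((f ^^ b) x) = (f ^^ (a + b)) x"
  by (simp add: funpow_add)

lemma orb_self: fixes f :: "'a \<Rightarrow> 'a" shows "c \<in> orb f c"
  unfolding orb_def by (rule range_eqI[of _ _ 0]) simp

lemma orb_inv: fixes f :: "'a \<Rightarrow> 'a" shows "y \<in> orb f c \<Longrightarrow> (f ^^ k) y \<in> orb f c"
  unfolding orb_def by (auto simp: funpow_comp_apply)

lemma orb_same:
  fixes f :: "'a \<Rightarrow> 'a"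
  assumes per: "(f ^^ m) c = c" and m: "m > 0" and z: "z \<in> orb f c"
  shows "orb f z = orb f c"
proof
  show "orb f z \<subseteq> orb f c" using orb_inv[OF z] unfolding orb_def[of f z] by auto
next
  obtain a where za: "z = (f ^^ a) c" using z unfolding orb_def by auto
  have am: "a \<le> a * m" using m by (cases m) auto
  have "c = (f ^^ (a * m)) c" using funpow_fix_mult[OF per] by simp
  also have "\<dots> = (f ^^ (a * m - a)) z" using am by (simp add: za funpow_comp_apply)
  finally have "c \<in> orb f z" unfolding orb_def by auto
  then show "orb f c \<subseteq> orb f z" using orb_inv unfolding orb_def[of f c] by auto
qed

lemma orb_disj:
  fixes f :: "'a \<Rightarrow> 'a"
  assumes "least_period f c m" "least_period f c' m'" "orb f c \<inter> orb f c' \<noteq> {}"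
  shows "orb f c = orb f c'"
proof -
  obtain z where z: "z \<in> orb f c" "z \<in> orb f c'" using assms(3) by blast
  have p1: "(f ^^ m) c = c" "m > 0" using assms(1) unfolding least_period_def by simp_all
  have p2: "(f ^^ m') c' = c'" "m' > 0" using assms(2) unfolding least_period_def by simp_all
  have "orb f c = orb f z" using orb_same[OF p1 z(1)] by simp
  also have "\<dots> = orb f c'" using orb_same[OF p2 z(2)] .
  finally show ?thesis .
qed

lemma lp_distinct:
  fixes f :: "'a \<Rightarrow> 'a"
  assumes lpc: "least_period f c m" and a: "a < m" and b: "b < m" and e: "(f ^^ a) c = (f ^^ b) c"
  shows "a = b"
proof -
  have gen: "False" if ab: "a' < b'" "b' < m" "(f ^^ a') c = (f ^^ b') c" for a' b'
  proof -
    have "(f ^^ (m - b' + a')) c = (f ^^ (m - b')) ((f ^^ a') c)" by (simp add: funpow_comp_apply)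
    also have "\<dots> = (f ^^ (m - b')) ((f ^^ b') c)" using ab(3) by simp
    also have "\<dots> = (f ^^ m) c" using ab by (simp add: funpow_comp_apply)
    also have "\<dots> = c" using lpc unfolding least_period_def by simp
    finally have "m dvd (m - b' + a')" using lpc[unfolded least_period_iff] by simp
    moreover have "0 < m - b' + a'" "m - b' + a' < m" using ab by auto
    ultimately show False using dvd_imp_le by fastforce
  qed
  show ?thesis
  proof (rule ccontr)
    assume "a \<noteq> b"
    hence "a < b \<or> b < a" by auto
    thus False using gen[of a b] gen[of b a] a b e by auto
  qed
qed

lemma orb_card:
  fixes f :: "'a \<Rightarrow> 'a"
  assumes lpc: "least_period f c m"
  shows "orb f c = (\<lambda>k. (f ^^ k) c) ` {..<m}" and "card (orb f c) = m"
proof -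
  have per: "(f ^^ m) c = c" and m: "m > 0" using lpc unfolding least_period_def by simp_all
  show eq: "orb f c = (\<lambda>k. (f ^^ k) c) ` {..<m}"
  proof
    show "orb f c \<subseteq> (\<lambda>k. (f ^^ k) c) ` {..<m}"
    proof
      fix y assume "y \<in> orb f c"
      then obtain k where "y = (f ^^ k) c" unfolding orb_def by auto
      hence "y = (f ^^ (k mod m)) c" using funpow_mod[OF per] by simp
      moreover have "k mod m < m" using m by simp
      ultimately show "y \<in> (\<lambda>k. (f ^^ k) c) ` {..<m}" by blast
    qed
  qed (auto simp: orb_def)
  have "inj_on (\<lambda>k. (f ^^ k) c) {..<m}"
    by (rule inj_onI) (use lp_distinct[OF lpc] in auto)
  thus "card (orb f c) = m" unfolding eq by (simp add: card_image)
qed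

lemma orb_fixall:
  fixes f :: "'a \<Rightarrow> 'a"
  assumes "(f ^^ m) c = c" and "y \<in> orb f c"
  shows "(f ^^ m) y = y"
proof -
  obtain a where y: "y = (f ^^ a) c" using assms(2) unfolding orb_def by auto
  have "(f ^^ m) y = (f ^^ (a + m)) c" unfolding y by (simp add: funpow_comp_apply add.commute)
  also have "\<dots> = (f ^^ a) ((f ^^ m) c)" by (simp add: funpow_comp_apply)
  finally show ?thesis using assms(1) y by simp
qed

lemma image_fix: "(\<And>y. y \<in> S \<Longrightarrow> g y = y) \<Longrightarrow> g ` S = S"
  by force

lemma finite_perm_periodic:
  fixes F :: "'a \<Rightarrow> 'a"
  assumes fin: "finite C" and im: "F ` C = C" and c: "c \<in> C"
  shows "\<exists>j>0. (F ^^ j) c = c"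
proof -
  have inj: "inj_on F C" using eq_card_imp_inj_on[OF fin, of F] im by simp
  have imk: "(F ^^ i) ` C = C" for i
  proof (induction i)
    case 0 show ?case by simp
  next
    case (Suc i)
    have "(F ^^ Suc i) ` C = F ` ((F ^^ i) ` C)" by (simp add: image_comp)
    thus ?case using Suc im by simp
  qed
  have injk: "inj_on (F ^^ i) C" for i
  proof (induction i)
    case 0 show ?case by simp
  next
    case (Suc i)
    have "inj_on (F \<circ> F ^^ i) C" using comp_inj_on[OF Suc] inj imk[of i] by simp
    thus ?case by (simp only: funpow.simps)
  qed
  have ni: "\<not> inj_on (\<lambda>k. (F ^^ k) c) {..card C}"
  proof
    assume a: "inj_on (\<lambda>k. (F ^^ k) c) {..card C}"
    have "(\<lambda>k. (F ^^ k) c) ` {..card C} \<subseteq> C" using imk c by blast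
    hence "card {..card C} \<le> card C" using card_inj_on_le[OF a _ fin] by blast
    thus False by simp
  qed
  obtain i j where ij: "i \<noteq> j" "(F ^^ i) c = (F ^^ j) c"
    using ni unfolding inj_on_def by blast
  have gen: "\<exists>j>0. (F ^^ j) c = c" if "a < b" "(F ^^ a) c = (F ^^ b) c" for a b
  proof -
    have "(F ^^ b) c = (F ^^ a) ((F ^^ (b - a)) c)"
      using that(1) by (simp add: funpow_add[symmetric, THEN fun_cong, simplified])
    hence "(F ^^ a) ((F ^^ (b - a)) c) = (F ^^ a) c" using that(2) by simp
    moreover have "(F ^^ (b - a)) c \<in> C" using imk c by blast
    ultimately have "(F ^^ (b - a)) c = c" using injk[of a] c unfolding inj_on_def by blast
    thus ?thesis using that(1) by (intro exI[of _ "b - a"]) simp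
  qed
  show ?thesis
  proof (cases "i < j")
    case True thus ?thesis using gen ij by blast
  next
    case False hence "j < i" using ij(1) by simp
    thus ?thesis using gen ij(2) by metis
  qed
qed

lemma split_fix:
  fixes P Q :: "'i \<Rightarrow> 'a set"
  assumes sub: "\<And>i. i \<in> I \<Longrightarrow> P i \<subseteq> Q i"
    and inv: "\<And>i y. i \<in> I \<Longrightarrow> y \<in> Q i \<Longrightarrow> h y \<in> Q i"
    and disj: "\<And>i j. i \<in> I \<Longrightarrow> j \<in> I \<Longrightarrow> i \<noteq> j \<Longrightarrow> Q i \<inter> Q j = {}"
  shows "h ` (\<Union>i\<in>I. P i) = (\<Union>i\<in>I. P i) \<longleftrightarrow> (\<forall>i\<in>I. h ` P i = P i)"
proof
  assume E: "h ` (\<Union>i\<in>I. P i) = (\<Union>i\<in>I. P i)"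
  show "\<forall>i\<in>I. h ` P i = P i"
  proof
    fix i assume i: "i \<in> I"
    show "h ` P i = P i"
    proof
      show "h ` P i \<subseteq> P i"
      proof
        fix z assume "z \<in> h ` P i"
        then obtain y where y: "y \<in> P i" "z = h y" by blast
        have "z \<in> (\<Union>i\<in>I. P i)" using E y i by blast
        then obtain j where j: "j \<in> I" "z \<in> P j" by blast
        have "z \<in> Q i" using inv[OF i] sub[OF i] y by blast
        moreover have "z \<in> Q j" using sub[OF j(1)] j(2) by blast
        ultimately have "i = j" using disj[OF i j(1)] by blast
        thus "z \<in> P i" using j by simp
      qed
    next
      show "P i \<subseteq> h ` P i"
      proof
        fix z assume z: "z \<in> P i"
        hence "z \<in> h ` (\<Union>i\<in>I. P i)" using E i by blast
        then obtain j y where j: "j \<in> I" "y \<in> P j" "z = h y" by blast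
        have "z \<in> Q j" using inv[OF j(1)] sub[OF j(1)] j by blast
        moreover have "z \<in> Q i" using sub[OF i] z by blast
        ultimately have "i = j" using disj[OF i j(1)] by blast
        thus "z \<in> h ` P i" using j by blast
      qed
    qed
  qed
next
  assume "\<forall>i\<in>I. h ` P i = P i"
  thus "h ` (\<Union>i\<in>I. P i) = (\<Union>i\<in>I. P i)" by (simp add: image_UN)
qed

lemma funpow_in: fixes f :: "'a \<Rightarrow> 'a" assumes "f ` X \<subseteq> X" "x \<in> X" shows "(f ^^ k) x \<in> X"
  by (induction k) (use assms in auto)



lemma piece_fix:
  fixes f :: "'a \<Rightarrow> 'a"
  assumes lpx: "least_period f x m" and D: "D dvd m" "D > 0"
  shows "(f ^^ k) ` ((\<lambda>j. (f ^^ (j * D)) x) ` {..<m div D}) = (\<lambda>j. (f ^^ (j * D)) x) ` {..<m div D}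
           \<longleftrightarrow> D dvd k"
proof -
  define q where "q = m div D"
  define R where "R j = (f ^^ (j * D)) x" for j
  define P where "P = R ` {..<q}"
  have per: "(f ^^ m) x = x" and m: "m > 0" using lpx unfolding least_period_def by simp_all
  have qD: "q * D = m" using D unfolding q_def by simp
  have q: "q > 0" using qD m by (cases q) auto
  have Rall: "R j \<in> P" for j
  proof -
    have "R j = (f ^^ ((j * D) mod m)) x" unfolding R_def by (rule funpow_mod[OF per])
    also have "(j * D) mod m = (j mod q) * D" unfolding qD[symmetric] by (rule mod_mult_mult2)
    finally have "R j = R (j mod q)" unfolding R_def .
    moreover have "j mod q < q" using q by simp
    ultimately show ?thesis unfolding P_def by blast
  qed
  have shift: "(f ^^ (t * D)) (R j) = R (t + j)" for t j
    unfolding R_def by (simp add: funpow_comp_apply add_mult_distrib)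
  have perR: "R (j + t * m) = R j" for j t
  proof -
    have "R (j + t * m) = (f ^^ (j * D)) ((f ^^ ((t * D) * m)) x)"
      unfolding R_def by (simp add: funpow_comp_apply algebra_simps)
    also have "(f ^^ ((t * D) * m)) x = x" by (rule funpow_fix_mult[OF per])
    finally show ?thesis unfolding R_def .
  qed
  have "(f ^^ k) ` P = P \<longleftrightarrow> D dvd k"
  proof
    assume E: "(f ^^ k) ` P = P"
    have "x = R 0" unfolding R_def by simp
    also have "R 0 \<in> P" by (rule Rall)
    finally have "x \<in> (f ^^ k) ` P" using E by simp
    then obtain j where "x = (f ^^ k) (R j)" unfolding P_def by blast
    hence "(f ^^ (k + j * D)) x = x" unfolding R_def by (simp add: funpow_comp_apply)
    hence "m dvd k + j * D" using lpx[unfolded least_period_iff] by simp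
    hence "D dvd k + j * D" using D(1) dvd_trans by blast
    thus "D dvd k" by simp
  next
    assume "D dvd k"
    then obtain t where k: "k = t * D" by (metis dvd_def mult.commute)
    show "(f ^^ k) ` P = P"
    proof
      show "(f ^^ k) ` P \<subseteq> P"
      proof (rule image_subsetI)
        fix z assume "z \<in> P"
        then obtain j where z: "z = R j" unfolding P_def by blast
        show "(f ^^ k) z \<in> P" unfolding z k shift by (rule Rall)
      qed
    next
      show "P \<subseteq> (f ^^ k) ` P"
      proof
        fix z assume "z \<in> P"
        then obtain j where z: "z = R j" unfolding P_def by blast
        have "t \<le> j + t * m" using m by (cases m) auto
        hence "(f ^^ k) (R (j + t * m - t)) = R (j + t * m)" unfolding k shift by simp
        also have "\<dots> = z" using z perR by simp
        finally show "z \<in> (f ^^ k) ` P" using Rall by (metis image_eqI)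
      qed
    qed
  qed
  thus ?thesis unfolding P_def R_def q_def .
qed

lemma mult_lt_of_lt_div: "i < m div (d::nat) \<Longrightarrow> d > 0 \<Longrightarrow> i * d < m"
proof -
  assume a: "i < m div d" and d: "d > 0"
  have "Suc i * d \<le> (m div d) * d" using a by (intro mult_le_mono1) simp
  also have "\<dots> \<le> m" by (metis div_mult_mod_eq le_add1)
  finally show "i * d < m" using d by simp
qed

lemma decomp:
  fixes f :: "'a \<Rightarrow> 'a"
  assumes fin: "finite C" and ne: "C \<noteq> {}" and CX: "C \<subseteq> X"
    and per: "least_period (induced f) C p"
  shows "\<exists>ds ms l. Lcm (set ds) = p \<and> 1 \<le> l \<and> l \<le> card C \<and> length ds = l \<and> length ms = l \<and>
     (\<forall>i<l. ds ! i dvd ms ! i \<and> ms ! i \<in> Per f X) \<and> (\<Sum>i<l. ms ! i div ds ! i) \<le> card C"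
proof -
  have p0: "p > 0" and pC: "(f ^^ p) ` C = C"
    using per unfolding least_period_def induced_funpow by simp_all
  have cper: "least_period f c (lp f c)" if cC: "c \<in> C" for c
  proof -
    obtain j where j: "j > 0" "((f ^^ p) ^^ j) c = c" using finite_perm_periodic[OF fin pC cC] by blast
    hence "(f ^^ (p * j)) c = c" by (simp add: funpow_mult)
    moreover have "p * j > 0" using p0 j(1) by simp
    ultimately show ?thesis by (rule lp_exists)
  qed
  define Orbs where "Orbs = orb f ` C"
  have finO: "finite Orbs" using fin by (simp add: Orbs_def)
  have Cun: "(\<Union>B\<in>Orbs. C \<inter> B) = C"
  proof
    show "(\<Union>B\<in>Orbs. C \<inter> B) \<subseteq> C" by blast
  next
    show "C \<subseteq> (\<Union>B\<in>Orbs. C \<inter> B)"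
    proof
      fix c assume c: "c \<in> C"
      hence "c \<in> C \<inter> orb f c" using orb_self[of c f] by simp
      moreover have "orb f c \<in> Orbs" using c unfolding Orbs_def by simp
      ultimately show "c \<in> (\<Union>B\<in>Orbs. C \<inter> B)" by blast
    qed
  qed
  have disj: "O1 \<inter> O2 = {}" if Os: "O1 \<in> Orbs" "O2 \<in> Orbs" "O1 \<noteq> O2" for O1 O2
  proof (rule ccontr)
    assume ne': "O1 \<inter> O2 \<noteq> {}"
    obtain c1 where c1: "c1 \<in> C" "O1 = orb f c1" using Os(1) unfolding Orbs_def by blast
    obtain c2 where c2: "c2 \<in> C" "O2 = orb f c2" using Os(2) unfolding Orbs_def by blast
    have "orb f c1 = orb f c2" using orb_disj[OF cper[OF c1(1)] cper[OF c2(1)]] ne' c1 c2 by simp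
    thus False using Os(3) c1 c2 by simp
  qed
  have inv: "(f ^^ k) y \<in> B" if Bs: "B \<in> Orbs" "y \<in> B" for B y k
  proof -
    obtain c where "B = orb f c" using Bs(1) unfolding Orbs_def by blast
    thus ?thesis using orb_inv[of y f c k] Bs(2) by simp
  qed
  have split: "(f ^^ k) ` C = C \<longleftrightarrow> (\<forall>B\<in>Orbs. (f ^^ k) ` (C \<inter> B) = C \<inter> B)" for k
  proof -
    have "(f ^^ k) ` (\<Union>B\<in>Orbs. C \<inter> B) = (\<Union>B\<in>Orbs. C \<inter> B)
          \<longleftrightarrow> (\<forall>B\<in>Orbs. (f ^^ k) ` (C \<inter> B) = C \<inter> B)"
      by (rule split_fix[where Q="\<lambda>B. B"]) (use inv disj in auto)
    thus ?thesis by (simp only: Cun)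
  qed
  define dO where "dO B = lp (induced f) (C \<inter> B)" for B
  have dlp: "least_period (induced f) (C \<inter> B) (dO B)" if "B \<in> Orbs" for B
  proof -
    have "(induced f ^^ p) (C \<inter> B) = C \<inter> B" using split[of p] pC that by (simp add: induced_funpow)
    thus ?thesis unfolding dO_def using p0 by (rule lp_exists)
  qed
  have dfix: "(f ^^ k) ` (C \<inter> B) = C \<inter> B \<longleftrightarrow> dO B dvd k" if "B \<in> Orbs" for B k
    using dlp[OF that] unfolding least_period_iff induced_funpow by simp
  have dpos: "dO B > 0" if "B \<in> Orbs" for B using least_period_pos[OF dlp[OF that]] .
  define L where "L = Lcm (dO ` Orbs)"
  have Lpos: "L > 0" unfolding L_def using dpos finO by (intro Lcm_pos) (auto, metis less_irrefl)
  have LL: "(induced f ^^ k) C = C \<longleftrightarrow> L dvd k" for k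
    unfolding induced_funpow split L_def Lcm_dvd_iff using dfix by simp
  have "least_period (induced f) C L" unfolding least_period_iff using Lpos LL by simp
  hence pL: "p = L" by (rule least_period_unique[OF per])
  have Ofacts: "dO B dvd card B \<and> card B \<in> Per f X \<and> card B div dO B \<le> card (C \<inter> B)"
    if B: "B \<in> Orbs" for B
  proof -
    obtain c where c: "c \<in> C" "B = orb f c" using B unfolding Orbs_def by blast
    define m where "m = lp f c"
    define d where "d = dO B"
    have lpc: "least_period f c m" using cper[OF c(1)] unfolding m_def .
    have cm: "(f ^^ m) c = c" using lpc unfolding least_period_def by simp
    have cardO: "card B = m" using orb_card(2)[OF lpc] c(2) by simp
    have PerO: "card B \<in> Per f X" unfolding cardO Per_def using lpc c(1) CX by blast
    have "(f ^^ m) ` (C \<inter> B) = C \<inter> B"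
      by (rule image_fix) (use orb_fixall[OF cm] c(2) in blast)
    hence ddvd: "d dvd m" using dfix[OF B] unfolding d_def by simp
    have d0: "d > 0" using dpos[OF B] unfolding d_def .
    have dC: "(f ^^ d) ` (C \<inter> B) = C \<inter> B" using dfix[OF B] unfolding d_def by simp
    have mem: "(f ^^ (j * d)) c \<in> C \<inter> B" for j
    proof (induction j)
      case 0 show ?case using c orb_self by simp
    next
      case (Suc j)
      have "(f ^^ (Suc j * d)) c = (f ^^ d) ((f ^^ (j * d)) c)" by (simp add: funpow_comp_apply)
      also have "\<dots> \<in> (f ^^ d) ` (C \<inter> B)" using Suc by blast
      finally show ?case using dC by simp
    qed
    have inj: "inj_on (\<lambda>j. (f ^^ (j * d)) c) {..<m div d}"
    proof (rule inj_onI)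
      fix i j assume i: "i \<in> {..<m div d}" and j: "j \<in> {..<m div d}"
        and e: "(f ^^ (i * d)) c = (f ^^ (j * d)) c"
      have "i * d < m" "j * d < m" using i j d0 mult_lt_of_lt_div by auto
      hence "i * d = j * d" using lp_distinct[OF lpc _ _ e] by simp
      thus "i = j" using d0 by simp
    qed
    have "card {..<m div d} \<le> card (C \<inter> B)"
      by (rule card_inj_on_le[OF inj]) (use mem fin in auto)
    thus ?thesis using ddvd PerO cardO unfolding d_def by simp
  qed
  obtain os where os: "set os = Orbs" "distinct os" using finite_distinct_list[OF finO] by blast
  define ds where "ds = map dO os"
  define ms where "ms = map card os"
  define l where "l = length os"
  define h where "h B = card B div dO B" for B
  have sum1: "(\<Sum>i<l. ms ! i div ds ! i) = sum h Orbs"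
  proof -
    have "(\<Sum>i<l. ms ! i div ds ! i) = (\<Sum>i<length os. h (os ! i))"
      unfolding ms_def ds_def l_def h_def by simp
    also have "\<dots> = sum_list (map h os)" by (simp add: sum_list_sum_nth atLeast0LessThan)
    also have "\<dots> = sum h Orbs" using os by (simp add: sum_list_distinct_conv_sum_set)
    finally show ?thesis .
  qed
  have "sum h Orbs \<le> (\<Sum>B\<in>Orbs. card (C \<inter> B))"
    by (rule sum_mono) (use Ofacts in \<open>simp add: h_def\<close>)
  also have "\<dots> = card (\<Union>B\<in>Orbs. C \<inter> B)"
    by (rule card_UN_disjoint[symmetric]) (use finO fin disj in auto)
  also have "\<dots> = card C" using Cun by simp
  finally have sumle: "(\<Sum>i<l. ms ! i div ds ! i) \<le> card C" using sum1 by simp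
  have lcard: "l \<le> card C"
  proof -
    have "l = card Orbs" unfolding l_def using os distinct_card by metis
    also have "\<dots> \<le> card C" unfolding Orbs_def using fin by (rule card_image_le)
    finally show ?thesis .
  qed
  have l1: "1 \<le> l" using ne os(1) unfolding l_def Orbs_def by (cases os) auto
  have Lcm_ds: "Lcm (set ds) = p" unfolding ds_def pL L_def using os(1) by simp
  have conds: "\<forall>i<l. ds ! i dvd ms ! i \<and> ms ! i \<in> Per f X"
  proof (intro allI impI)
    fix i assume "i < l"
    hence "os ! i \<in> Orbs" using os(1) unfolding l_def by (metis nth_mem)
    thus "ds ! i dvd ms ! i \<and> ms ! i \<in> Per f X" using Ofacts \<open>i < l\<close> unfolding ds_def ms_def l_def by simp
  qed
  show ?thesis
    by (rule exI[of _ ds], rule exI[of _ ms], rule exI[of _ l])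
       (use Lcm_ds l1 lcard conds sumle in \<open>simp add: ds_def ms_def l_def\<close>)
qed



lemma construct:
  fixes f :: "'a \<Rightarrow> 'a"
  assumes fX: "f ` X \<subseteq> X"
    and l: "1 \<le> l" "length ds = l" "length ms = l"
    and cond: "\<forall>i<l. ds ! i dvd ms ! i \<and> ms ! i \<in> Per f X"
  shows "\<exists>C. finite C \<and> C \<noteq> {} \<and> C \<subseteq> X \<and> card C \<le> (\<Sum>i<l. ms ! i div ds ! i)
           \<and> least_period (induced f) C (Lcm (set ds))"
proof -
  define M where "M = set ms"
  have finM: "finite M" unfolding M_def by simp
  have Mne: "M \<noteq> {}" using l unfolding M_def by auto
  have mI: "\<exists>i<l. ms ! i = m" if "m \<in> M" for m
    using that l(3) unfolding M_def by (auto simp: in_set_conv_nth)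
  have mPer: "m \<in> Per f X" if "m \<in> M" for m using mI[OF that] cond by blast
  define x where "x m = (SOME y. y \<in> X \<and> least_period f y m)" for m
  have xm: "x m \<in> X \<and> least_period f (x m) m" if "m \<in> M" for m
  proof -
    have "\<exists>y. y \<in> X \<and> least_period f y m" using mPer[OF that] unfolding Per_def by blast
    thus ?thesis unfolding x_def by (rule someI_ex)
  qed
  have mpos: "m > 0" if "m \<in> M" for m using least_period_pos[OF xm[OF that, THEN conjunct2]] .
  have mspos: "ms ! i > 0" if "i < l" for i using mpos that l(3) unfolding M_def by simp
  have dspos: "ds ! i > 0" if "i < l" for i
  proof (rule ccontr)
    assume "\<not> ds ! i > 0" hence "ds ! i = 0" by simp
    moreover have "ds ! i dvd ms ! i" using cond that by blast
    ultimately have "ms ! i = 0" by simp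
    thus False using mspos[OF that] by simp
  qed
  define I where "I m = {i. i < l \<and> ms ! i = m}" for m
  define D where "D m = Lcm ((\<lambda>i. ds ! i) ` I m)" for m
  have Ddvd: "D m dvd m" if "m \<in> M" for m
    unfolding D_def by (rule Lcm_least) (use cond in \<open>auto simp: I_def\<close>)
  have Dpos: "D m > 0" if "m \<in> M" for m
  proof (rule ccontr)
    assume "\<not> D m > 0" hence "D m = 0" by simp
    hence "m = 0" using Ddvd[OF that] by simp
    thus False using mpos[OF that] by simp
  qed
  have dsI: "ds ! i dvd D m" if "i \<in> I m" for i m
    unfolding D_def using that by (intro dvd_Lcm) blast
  define P where "P m = (\<lambda>j. (f ^^ (j * D m)) (x m)) ` {..<m div D m}" for m
  define C where "C = (\<Union>m\<in>M. P m)"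
  have Pfix: "(f ^^ k) ` P m = P m \<longleftrightarrow> D m dvd k" if "m \<in> M" for m k
    unfolding P_def using piece_fix[OF xm[OF that, THEN conjunct2] Ddvd[OF that] Dpos[OF that]] .
  have Psub: "P m \<subseteq> orb f (x m)" for m unfolding P_def orb_def by auto
  have disj: "orb f (x m) \<inter> orb f (x m') = {}" if mm: "m \<in> M" "m' \<in> M" "m \<noteq> m'" for m m'
  proof (rule ccontr)
    assume ne: "orb f (x m) \<inter> orb f (x m') \<noteq> {}"
    have l1: "least_period f (x m) m" using xm[OF mm(1)] by (rule conjunct2)
    have l2: "least_period f (x m') m'" using xm[OF mm(2)] by (rule conjunct2)
    have e: "orb f (x m) = orb f (x m')" by (rule orb_disj[OF l1 l2 ne])
    have "m = card (orb f (x m))" using orb_card(2)[OF l1] by (rule sym)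
    also have "\<dots> = card (orb f (x m'))" by (simp only: e)
    also have "\<dots> = m'" by (rule orb_card(2)[OF l2])
    finally show False using mm(3) by simp
  qed
  have split: "(f ^^ k) ` C = C \<longleftrightarrow> (\<forall>m\<in>M. (f ^^ k) ` P m = P m)" for k
    unfolding C_def
    by (rule split_fix[where Q="\<lambda>m. orb f (x m)"]) (use Psub orb_inv disj in auto)
  have fixC: "(induced f ^^ k) C = C \<longleftrightarrow> Lcm (set ds) dvd k" for k
  proof -
    have "(induced f ^^ k) C = C \<longleftrightarrow> (\<forall>m\<in>M. D m dvd k)"
      unfolding induced_funpow split using Pfix by simp
    also have "\<dots> \<longleftrightarrow> (\<forall>i<l. ds ! i dvd k)"
    proof
      assume a: "\<forall>m\<in>M. D m dvd k"
      show "\<forall>i<l. ds ! i dvd k"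
      proof (intro allI impI)
        fix i assume i: "i < l"
        have mi: "ms ! i \<in> M" using i l(3) unfolding M_def by simp
        have "i \<in> I (ms ! i)" using i unfolding I_def by simp
        hence "ds ! i dvd D (ms ! i)" by (rule dsI)
        thus "ds ! i dvd k" using a mi dvd_trans by blast
      qed
    next
      assume a: "\<forall>i<l. ds ! i dvd k"
      show "\<forall>m\<in>M. D m dvd k"
      proof
        fix m assume "m \<in> M"
        show "D m dvd k" unfolding D_def by (rule Lcm_least) (use a in \<open>auto simp: I_def\<close>)
      qed
    qed
    also have "\<dots> \<longleftrightarrow> Lcm (set ds) dvd k"
      unfolding Lcm_dvd_iff using l(2) by (auto simp: in_set_conv_nth) (metis nth_mem)
    finally show ?thesis .
  qed
  have Lpos: "Lcm (set ds) > 0"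
  proof (rule Lcm_pos)
    show "0 \<notin> set ds"
    proof
      assume "0 \<in> set ds"
      then obtain i where "i < l" "ds ! i = 0" using l(2) by (auto simp: in_set_conv_nth)
      thus False using dspos by fastforce
    qed
  qed simp
  have lpC: "least_period (induced f) C (Lcm (set ds))"
    unfolding least_period_iff using Lpos fixC by simp
  have finC: "finite C" unfolding C_def P_def using finM by simp
  have qpos: "m div D m > 0" if "m \<in> M" for m
  proof -
    have "D m \<le> m" using Ddvd[OF that] mpos[OF that] by (rule dvd_imp_le)
    thus ?thesis using Dpos[OF that] by (simp add: div_greater_zero_iff)
  qed
  have neC: "C \<noteq> {}"
  proof -
    obtain m where m: "m \<in> M" using Mne by blast
    have "x m \<in> P m" unfolding P_def using qpos[OF m] by (intro image_eqI[of _ _ 0]) auto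
    thus ?thesis unfolding C_def using m by blast
  qed
  have CX: "C \<subseteq> X" unfolding C_def P_def using xm funpow_in[OF fX] by blast
  have "card C \<le> (\<Sum>m\<in>M. card (P m))" unfolding C_def using finM by (rule card_UN_le)
  also have "\<dots> \<le> (\<Sum>m\<in>M. m div D m)"
    by (rule sum_mono) (metis P_def card_image_le card_lessThan finite_lessThan)
  also have "\<dots> \<le> (\<Sum>m\<in>M. \<Sum>i\<in>I m. ms ! i div ds ! i)"
  proof (rule sum_mono)
    fix m assume m: "m \<in> M"
    obtain i0 where i0: "i0 < l" "ms ! i0 = m" using mI[OF m] by blast
    have iI: "i0 \<in> I m" using i0 unfolding I_def by simp
    have "ds ! i0 \<le> D m" using dsI[OF iI] Dpos[OF m] by (rule dvd_imp_le)
    hence "m div D m \<le> m div ds ! i0" using dspos[OF i0(1)] div_le_mono2 by blast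
    also have "\<dots> = ms ! i0 div ds ! i0" using i0 by simp
    also have "\<dots> \<le> (\<Sum>i\<in>I m. ms ! i div ds ! i)"
      by (rule member_le_sum) (use iI in \<open>auto simp: I_def\<close>)
    finally show "m div D m \<le> (\<Sum>i\<in>I m. ms ! i div ds ! i)" .
  qed
  also have "\<dots> = (\<Sum>i<l. ms ! i div ds ! i)"
  proof -
    have Ieq: "\<And>m. I m = {i \<in> {..<l}. ms ! i = m}" unfolding I_def by auto
    show ?thesis unfolding Ieq by (rule sum.group) (use l(3) in \<open>auto simp: M_def\<close>)
  qed
  finally have cardC: "card C \<le> (\<Sum>i<l. ms ! i div ds ! i)" .
  show ?thesis using finC neC CX cardC lpC by blast
qed


theorem proposition8p1:
  fixes X :: "'a::metric_space set" and f :: "'a \<Rightarrow> 'a" and n :: nat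
  assumes "compact X" and "continuous_on X f" and "f ` X \<subseteq> X"
  shows "Per (map f) (prod_space X n) =
           {Lcm (set ms) | ms. length ms = n \<and> set ms \<subseteq> Per f X}
     \<and> Per (induced f) (Fn X n) =
           {Lcm (set ds) | ds ms l. 1 \<le> l \<and> l \<le> n \<and> length ds = l \<and> length ms = l \<and>
              (\<forall>i<l. ds ! i dvd ms ! i \<and> ms ! i \<in> Per f X) \<and>
              (\<Sum>i<l. ms ! i div ds ! i) \<le> n}
     \<and> Per (induced f) (Ffin X) =
           {Lcm (set ds) | ds ms l. 1 \<le> l \<and> length ds = l \<and> length ms = l \<and>
              (\<forall>i<l. ds ! i dvd ms ! i \<and> ms ! i \<in> Per f X)}"
proof (intro conjI)
  show "Per (map f) (prod_space X n) =
           {Lcm (set ms) | ms. length ms = n \<and> set ms \<subseteq> Per f X}" by (rule part1)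
next
  show "Per (induced f) (Fn X n) =
           {Lcm (set ds) | ds ms l. 1 \<le> l \<and> l \<le> n \<and> length ds = l \<and> length ms = l \<and>
              (\<forall>i<l. ds ! i dvd ms ! i \<and> ms ! i \<in> Per f X) \<and>
              (\<Sum>i<l. ms ! i div ds ! i) \<le> n}"
  proof (intro set_eqI iffI)
    fix p assume "p \<in> Per (induced f) (Fn X n)"
    then obtain C where C: "C \<in> Fn X n" "least_period (induced f) C p" unfolding Per_def by blast
    have Cf: "finite C" "C \<noteq> {}" "C \<subseteq> X" "card C \<le> n" using C(1) unfolding Fn_def by auto
    obtain ds ms l where H: "Lcm (set ds) = p" "1 \<le> l" "l \<le> card C" "length ds = l" "length ms = l"
      "\<forall>i<l. ds ! i dvd ms ! i \<and> ms ! i \<in> Per f X" "(\<Sum>i<l. ms ! i div ds ! i) \<le> card C"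
      using decomp[OF Cf(1-3) C(2)] by blast
    show "p \<in> {Lcm (set ds) | ds ms l. 1 \<le> l \<and> l \<le> n \<and> length ds = l \<and> length ms = l \<and>
              (\<forall>i<l. ds ! i dvd ms ! i \<and> ms ! i \<in> Per f X) \<and>
              (\<Sum>i<l. ms ! i div ds ! i) \<le> n}"
      unfolding mem_Collect_eq
      by (rule exI[of _ ds], rule exI[of _ ms], rule exI[of _ l]) (use H Cf(4) in auto)
  next
    fix p assume "p \<in> {Lcm (set ds) | ds ms l. 1 \<le> l \<and> l \<le> n \<and> length ds = l \<and> length ms = l \<and>
              (\<forall>i<l. ds ! i dvd ms ! i \<and> ms ! i \<in> Per f X) \<and>
              (\<Sum>i<l. ms ! i div ds ! i) \<le> n}"
    then obtain ds ms l where H: "p = Lcm (set ds)" "1 \<le> l" "l \<le> n" "length ds = l" "length ms = l"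
      "\<forall>i<l. ds ! i dvd ms ! i \<and> ms ! i \<in> Per f X" "(\<Sum>i<l. ms ! i div ds ! i) \<le> n"
      unfolding mem_Collect_eq by blast
    obtain C where C: "finite C" "C \<noteq> {}" "C \<subseteq> X" "card C \<le> (\<Sum>i<l. ms ! i div ds ! i)"
      "least_period (induced f) C (Lcm (set ds))"
      using construct[OF assms(3) H(2) H(4) H(5) H(6)] by blast
    have "C \<in> Fn X n" unfolding Fn_def using C H(7) by auto
    thus "p \<in> Per (induced f) (Fn X n)" unfolding Per_def H(1) using C(5) by blast
  qed
next
  show "Per (induced f) (Ffin X) =
           {Lcm (set ds) | ds ms l. 1 \<le> l \<and> length ds = l \<and> length ms = l \<and>
              (\<forall>i<l. ds ! i dvd ms ! i \<and> ms ! i \<in> Per f X)}"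
  proof (intro set_eqI iffI)
    fix p assume "p \<in> Per (induced f) (Ffin X)"
    then obtain C where C: "C \<in> Ffin X" "least_period (induced f) C p" unfolding Per_def by blast
    have Cf: "finite C" "C \<noteq> {}" "C \<subseteq> X" using C(1) unfolding Ffin_def by auto
    obtain ds ms l where H: "Lcm (set ds) = p" "1 \<le> l" "length ds = l" "length ms = l"
      "\<forall>i<l. ds ! i dvd ms ! i \<and> ms ! i \<in> Per f X"
      using decomp[OF Cf(1-3) C(2)] by blast
    show "p \<in> {Lcm (set ds) | ds ms l. 1 \<le> l \<and> length ds = l \<and> length ms = l \<and>
              (\<forall>i<l. ds ! i dvd ms ! i \<and> ms ! i \<in> Per f X)}"
      unfolding mem_Collect_eq
      by (rule exI[of _ ds], rule exI[of _ ms], rule exI[of _ l]) (use H in auto)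
  next
    fix p assume "p \<in> {Lcm (set ds) | ds ms l. 1 \<le> l \<and> length ds = l \<and> length ms = l \<and>
              (\<forall>i<l. ds ! i dvd ms ! i \<and> ms ! i \<in> Per f X)}"
    then obtain ds ms l where H: "p = Lcm (set ds)" "1 \<le> l" "length ds = l" "length ms = l"
      "\<forall>i<l. ds ! i dvd ms ! i \<and> ms ! i \<in> Per f X"
      unfolding mem_Collect_eq by blast
    obtain C where C: "finite C" "C \<noteq> {}" "C \<subseteq> X"
      "least_period (induced f) C (Lcm (set ds))"
      using construct[OF assms(3) H(2) H(3) H(4) H(5)] by blast
    have "C \<in> Ffin X" unfolding Ffin_def using C by auto
    thus "p \<in> Per (induced f) (Ffin X)" unfolding Per_def H(1) using C(4) by blast
  qed
qed

end
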